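(* Let $n,m$ be positive integers with $m>1$. (a) $\nu(n)=\nu(n,m)=\lceil n/2\rceil$. (b) If $n\ge m$, then $\nu^*(n,m)=\nu(n,m)+1$ if $n$ is even and $m$ is odd, and $\nu^*(n,m)=\nu(n,m)$ otherwise. In particular, $\nu^*(n,2)=\nu^*(n)=\nu(n)$ for all $n>1$.
   Context: Let $\mathbb F_2=\{0,1\}$ be the field with two elements. For $u\in\mathbb F_2^n$, $|u|$ denotes the Hamming weight of $u$. A wiring on $n$ vertices is a matrix $W=(w_{i,j})\in M(n,n;\mathbb F_2)$ with $w_{i,i}=1$ for all $i$. The degree of vertex $j$ is the number of $1$s in the $j$th column of $W$, and $\deg(W)$ is the maximum degree over all vertices. For $c\in\mathbb F_2^n$, $M(W,c)=\max\{|Wx+c| : x\in\mathbb F_2^n\}$. For $n,m\ge1$, $A(n,m)$ is the set of wirings on $n$ vertices with $\deg(W)\le m$; for $n\ge m$, $A^*(n,m)$ is the set of wirings on $n$ vertices in which every vertex has degree exactly $m$. Define $\nu(n,m)=\min\{M(W,c): W\in A(n,m),\ c\in\mathbb F_2^n\}$, for $n\ge m$ $\nu^*(n,m)=\min\{M(W,c): W\in A^*(n,m),\ c\in\mathbb F_2^n\}$, and $\nu(n)=\nu(n,n)$, $\nu^*(n)=\nu^*(n,n)$. *)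

theory Defs
  imports Complex_Main "HOL-Library.Z2"
begin

text \<open>Vectors in F_2^n are functions nat => bit supported on {0..<n};
  n x n matrices over F_2 are functions nat => nat => bit supported on {0..<n} x {0..<n}.\<close>

definition vecs :: "nat \<Rightarrow> (nat \<Rightarrow> bit) set" where
  "vecs n = {x. \<forall>i\<ge>n. x i = 0}"

definition weight :: "nat \<Rightarrow> (nat \<Rightarrow> bit) \<Rightarrow> nat" where
  "weight n u = card {i. i < n \<and> u i \<noteq> 0}"

definition mat_vec :: "nat \<Rightarrow> (nat \<Rightarrow> nat \<Rightarrow> bit) \<Rightarrow> (nat \<Rightarrow> bit) \<Rightarrow> (nat \<Rightarrow> bit)" where
  "mat_vec n W x = (\<lambda>i. if i < n then (\<Sum>j<n. W i j * x j) else 0)"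

definition is_matrix :: "nat \<Rightarrow> (nat \<Rightarrow> nat \<Rightarrow> bit) \<Rightarrow> bool" where
  "is_matrix n W \<longleftrightarrow> (\<forall>i j. (n \<le> i \<or> n \<le> j) \<longrightarrow> W i j = 0)"

definition wiring :: "nat \<Rightarrow> (nat \<Rightarrow> nat \<Rightarrow> bit) \<Rightarrow> bool" where
  "wiring n W \<longleftrightarrow> is_matrix n W \<and> (\<forall>i<n. W i i = 1)"

definition vdeg :: "nat \<Rightarrow> (nat \<Rightarrow> nat \<Rightarrow> bit) \<Rightarrow> nat \<Rightarrow> nat" where
  "vdeg n W j = card {i. i < n \<and> W i j = 1}"

definition wdeg :: "nat \<Rightarrow> (nat \<Rightarrow> nat \<Rightarrow> bit) \<Rightarrow> nat" where
  "wdeg n W = Max (vdeg n W ` {..<n})"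

definition MW :: "nat \<Rightarrow> (nat \<Rightarrow> nat \<Rightarrow> bit) \<Rightarrow> (nat \<Rightarrow> bit) \<Rightarrow> nat" where
  "MW n W c = Max ((\<lambda>x. weight n (\<lambda>i. mat_vec n W x i + c i)) ` vecs n)"

definition A :: "nat \<Rightarrow> nat \<Rightarrow> (nat \<Rightarrow> nat \<Rightarrow> bit) set" where
  "A n m = {W. wiring n W \<and> wdeg n W \<le> m}"

definition A_star :: "nat \<Rightarrow> nat \<Rightarrow> (nat \<Rightarrow> nat \<Rightarrow> bit) set" where
  "A_star n m = {W. wiring n W \<and> (\<forall>j<n. vdeg n W j = m)}"

definition nu :: "nat \<Rightarrow> nat \<Rightarrow> nat" where
  "nu n m = Min {MW n W c | W c. W \<in> A n m \<and> c \<in> vecs n}"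

definition nu_star :: "nat \<Rightarrow> nat \<Rightarrow> nat" where
  "nu_star n m = Min {MW n W c | W c. W \<in> A_star n m \<and> c \<in> vecs n}"

abbreviation nu1 :: "nat \<Rightarrow> nat" where "nu1 n \<equiv> nu n n"
abbreviation nu_star1 :: "nat \<Rightarrow> nat" where "nu_star1 n \<equiv> nu_star n n"

end

theory Submission
  imports Defs
begin

declare add_bit_eq_xor[simp del] mult_bit_eq_and[simp del]

lemma bit_cases01: "(b::bit) = 0 \<or> b = 1" by (cases b) auto

lemma of_nat_bit: "(of_nat k :: bit) = (if odd k then 1 else 0)"
  by (induction k) auto

lemma vecs_finite: "finite (vecs n)"
proof -
  have "vecs n \<subseteq> (\<lambda>S i. if i \<in> S then 1 else 0) ` Pow {..<n}"
  proof
    fix x assume x: "x \<in> vecs n"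
    have "x = (\<lambda>i. if i \<in> {i. i < n \<and> x i = 1} then 1 else 0)"
      using x unfolding vecs_def by (auto simp: fun_eq_iff)
    then show "x \<in> (\<lambda>S i. if i \<in> S then 1 else 0) ` Pow {..<n}" by blast
  qed
  then show ?thesis by (rule finite_subset) auto
qed

lemma zero_vecs: "(\<lambda>_. 0) \<in> vecs n" by (simp add: vecs_def)

lemma weight_le: "weight n u \<le> n"
proof -
  have "weight n u \<le> card {..<n}" unfolding weight_def by (rule card_mono) auto
  then show ?thesis by simp
qed

lemma weight_parity: "(of_nat (weight n u) :: bit) = (\<Sum>i<n. u i)"
proof -
  have "(\<Sum>i<n. u i) = (\<Sum>i<n. if u i \<noteq> 0 then 1 else 0)"
    by (rule sum.cong) auto
  also have "\<dots> = (\<Sum>i\<in>{i\<in>{..<n}. u i \<noteq> 0}. 1)"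
    by (rule sum.inter_filter[OF finite_lessThan, symmetric])
  also have "\<dots> = of_nat (weight n u)" unfolding weight_def
  proof -
    have "{i\<in>{..<n}. u i \<noteq> 0} = {i. i < n \<and> u i \<noteq> 0}" by auto
    then show "(\<Sum>i\<in>{i\<in>{..<n}. u i \<noteq> 0}. (1::bit)) = of_nat (card {i. i < n \<and> u i \<noteq> 0})"
      by (simp only: sum_constant) simp
  qed
  finally show ?thesis by simp
qed

lemma ceil_half: "nat \<lceil>real n / 2\<rceil> = (n + 1) div 2"
proof (cases "even n")
  case True then obtain k where "n = 2*k" by blast
  then show ?thesis by simp
next
  case False then obtain k where k: "n = 2*k+1" using oddE by blast
  have "\<lceil>real n / 2\<rceil> = int k + 1"
    by (rule ceiling_unique) (auto simp: k)
  then show ?thesis by (simp add: k)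
qed

definition vv :: "nat \<Rightarrow> (nat \<Rightarrow> nat \<Rightarrow> bit) \<Rightarrow> (nat \<Rightarrow> bit) \<Rightarrow> (nat \<Rightarrow> bit) \<Rightarrow> nat \<Rightarrow> bit" where
  "vv n W c x i = mat_vec n W x i + c i"

lemma bit_add_self: "(b::bit) + b = 0" by (cases b) auto

lemma flip_mv:
  assumes "wiring n W" "i < n"
  shows "mat_vec n W (x(i := x i + 1)) i = mat_vec n W x i + 1"
proof -
  have e: "\<And>j. (x(i := x i + 1)) j = x j + (if j = i then 1 else 0)" by auto
  have "mat_vec n W (x(i := x i + 1)) i = (\<Sum>j<n. W i j * x j + (if j = i then W i j else 0))"
    using assms(2) unfolding mat_vec_def e by (auto simp: distrib_left intro!: sum.cong)
  also have "\<dots> = mat_vec n W x i + W i i"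
    using assms(2) by (simp add: sum.distrib mat_vec_def)
  finally show ?thesis using assms unfolding wiring_def by simp
qed

lemma flip_vecs: "x \<in> vecs n \<Longrightarrow> i < n \<Longrightarrow> x(i := x i + 1) \<in> vecs n"
  by (auto simp: vecs_def)

lemma bb11: "(b::bit) + 1 + 1 = b" by (cases b) auto

lemma flip_flip: fixes x :: "nat \<Rightarrow> bit" shows "(x(i := x i + 1))(i := (x(i := x i + 1)) i + 1) = x"
proof (rule ext)
  fix j show "((x(i := x i + 1))(i := (x(i := x i + 1)) i + 1)) j = x j"
  proof (cases "j = i")
    case True then show ?thesis using bb11[of "x i"] by simp
  qed simp
qed

lemma half_count:
  assumes "wiring n W" "i < n"
  shows "card (vecs n) = 2 * card {x\<in>vecs n. vv n W c x i \<noteq> 0}"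
proof -
  let ?A = "{x\<in>vecs n. vv n W c x i \<noteq> 0}" and ?B = "{x\<in>vecs n. vv n W c x i = 0}"
  let ?f = "\<lambda>x. x(i := x i + 1)"
  have fv: "\<And>x. vv n W c (?f x) i = vv n W c x i + 1"
    using flip_mv[OF assms] unfolding vv_def by (simp add: algebra_simps)
  have inj: "inj_on ?f S" for S :: "(nat \<Rightarrow> bit) set"
    by (rule inj_on_inverseI[where g = ?f]) (rule flip_flip)
  have fin: "finite ?A" "finite ?B" using vecs_finite by auto
  have "?f ` ?A \<subseteq> ?B"
    using fv flip_vecs[OF _ assms(2)] by (auto simp: bit_add_self)
  then have "card ?A \<le> card ?B" using card_inj_on_le[OF inj] fin by blast
  moreover have "?f ` ?B \<subseteq> ?A"
    using fv flip_vecs[OF _ assms(2)] by auto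
  then have "card ?B \<le> card ?A" using card_inj_on_le[OF inj] fin by blast
  moreover have "card (vecs n) = card ?A + card ?B"
  proof -
    have "vecs n = ?A \<union> ?B" by auto
    moreover have "?A \<inter> ?B = {}" by auto
    ultimately show ?thesis using card_Un_disjoint[OF fin] by simp
  qed
  ultimately show ?thesis by simp
qed

lemma sum_weights:
  assumes "wiring n W" "0 < n"
  shows "(\<Sum>x\<in>vecs n. weight n (vv n W c x)) * 2 = n * card (vecs n)"
proof -
  have "(\<Sum>x\<in>vecs n. weight n (vv n W c x)) = (\<Sum>x\<in>vecs n. \<Sum>i<n. if vv n W c x i \<noteq> 0 then 1 else 0)"
  proof (rule sum.cong)
    fix x
    have "weight n (vv n W c x) = card {i\<in>{..<n}. vv n W c x i \<noteq> 0}"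
    proof -
      have "{i. i < n \<and> vv n W c x i \<noteq> 0} = {i\<in>{..<n}. vv n W c x i \<noteq> 0}" by auto
      then show ?thesis by (simp only: weight_def)
    qed
    also have "\<dots> = (\<Sum>i<n. if vv n W c x i \<noteq> 0 then 1 else 0)"
      by (subst sum.inter_filter[OF finite_lessThan, symmetric]) simp
    finally show "weight n (vv n W c x) = (\<Sum>i<n. if vv n W c x i \<noteq> 0 then 1 else 0)" .
  qed simp
  also have "\<dots> = (\<Sum>i<n. \<Sum>x\<in>vecs n. if vv n W c x i \<noteq> 0 then 1 else 0)"
    by (rule sum.swap)
  also have "\<dots> = (\<Sum>i<n. card {x\<in>vecs n. vv n W c x i \<noteq> 0})"
    using vecs_finite by (simp add: sum.If_cases Int_def)
  finally have "(\<Sum>x\<in>vecs n. weight n (vv n W c x)) * 2 = (\<Sum>i<n. card {x\<in>vecs n. vv n W c x i \<noteq> 0} * 2)"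
    by (simp add: sum_distrib_right)
  also have "\<dots> = (\<Sum>i<n. card (vecs n))"
    using half_count[OF assms(1)] by (intro sum.cong) (auto simp: mult.commute)
  finally show ?thesis by simp
qed

lemma MW_ge:
  assumes "x \<in> vecs n" shows "weight n (vv n W c x) \<le> MW n W c"
  unfolding MW_def vv_def using assms vecs_finite by (intro Max_ge) auto

lemma MW_le:
  assumes "\<And>x. x \<in> vecs n \<Longrightarrow> weight n (vv n W c x) \<le> b" shows "MW n W c \<le> b"
  unfolding MW_def using assms[unfolded vv_def] vecs_finite zero_vecs[of n]
  by (subst Max_le_iff) (auto simp: vv_def)

lemma lower1:
  assumes "wiring n W" "0 < n"
  shows "n \<le> 2 * MW n W c"
proof -
  have "n * card (vecs n) = (\<Sum>x\<in>vecs n. weight n (vv n W c x)) * 2"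
    using sum_weights[OF assms] by simp
  also have "\<dots> \<le> (\<Sum>x\<in>vecs n. MW n W c) * 2"
    by (intro mult_right_mono sum_mono MW_ge) auto
  also have "\<dots> = (2 * MW n W c) * card (vecs n)" by simp
  finally have "n * card (vecs n) \<le> (2 * MW n W c) * card (vecs n)" .
  moreover have "card (vecs n) > 0"
    using vecs_finite zero_vecs card_gt_0_iff by blast
  ultimately show ?thesis by simp
qed

lemma lower2:
  assumes "wiring n W" "0 < n" "even n" "odd (vdeg n W 0)"
  shows "n div 2 + 1 \<le> MW n W c"
proof (rule ccontr)
  assume "\<not> ?thesis"
  then have le: "\<And>x. x \<in> vecs n \<Longrightarrow> weight n (vv n W c x) \<le> n div 2"
    using MW_ge[of _ n W c] by fastforce
  have eq: "weight n (vv n W c x) = n div 2" if x: "x \<in> vecs n" for x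
  proof (rule ccontr)
    assume "weight n (vv n W c x) \<noteq> n div 2"
    with le[OF x] have lt: "weight n (vv n W c x) < n div 2" by simp
    have "(\<Sum>x\<in>vecs n. weight n (vv n W c x)) < (\<Sum>x\<in>vecs n. n div 2)"
      using vecs_finite le lt x by (intro sum_strict_mono_ex1) auto
    then have "(\<Sum>x\<in>vecs n. weight n (vv n W c x)) * 2 < card (vecs n) * (n div 2) * 2" by simp
    also have "\<dots> = n * card (vecs n)" using assms(3) by simp
    finally show False using sum_weights[OF assms(1,2), of c] by simp
  qed
  define x0 :: "nat \<Rightarrow> bit" where "x0 = (\<lambda>_. 0)"
  define x1 :: "nat \<Rightarrow> bit" where "x1 = (\<lambda>j. if j = 0 then 1 else 0)"
  have v0: "x0 \<in> vecs n" "x1 \<in> vecs n" using assms(2) by (auto simp: vecs_def x0_def x1_def)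
  have m0: "\<And>i. mat_vec n W x0 i = 0" by (simp add: mat_vec_def x0_def)
  have m1: "\<And>i. i < n \<Longrightarrow> mat_vec n W x1 i = W i 0"
    using assms(2) by (simp add: mat_vec_def x1_def if_distrib[where f="\<lambda>t. _ * t"] sum.delta cong: if_cong)
  have "(of_nat (weight n (vv n W c x1)) :: bit) = (\<Sum>i<n. W i 0 + c i)"
    unfolding weight_parity vv_def by (intro sum.cong) (auto simp: m1)
  also have "\<dots> = (\<Sum>i<n. W i 0) + (\<Sum>i<n. c i)" by (simp add: sum.distrib)
  also have "(\<Sum>i<n. W i 0) = of_nat (weight n (\<lambda>i. W i 0))" by (simp add: weight_parity)
  also have "weight n (\<lambda>i. W i 0) = vdeg n W 0" unfolding weight_def vdeg_def by simp
  also have "(\<Sum>i<n. c i) = of_nat (weight n (vv n W c x0))"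
    unfolding weight_parity vv_def by (simp add: m0)
  finally have "(of_nat (weight n (vv n W c x1)) :: bit) = of_nat (vdeg n W 0) + of_nat (weight n (vv n W c x0))" .
  then show False using eq[OF v0(1)] eq[OF v0(2)] assms(4) by (simp add: of_nat_bit)
qed

definition mk :: "nat \<Rightarrow> (nat \<Rightarrow> nat set) \<Rightarrow> nat \<Rightarrow> nat \<Rightarrow> bit" where
  "mk n R i j = (if i < n \<and> j < n \<and> j \<in> R i then 1 else 0)"

lemma mk_wiring: "(\<And>i. i < n \<Longrightarrow> i \<in> R i) \<Longrightarrow> wiring n (mk n R)"
  by (auto simp: wiring_def is_matrix_def mk_def)

lemma mk_vdeg: "j < n \<Longrightarrow> vdeg n (mk n R) j = card {i. i < n \<and> j \<in> R i}"
  unfolding vdeg_def mk_def by (rule arg_cong[where f=card]) auto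

lemma mk_mv: "i < n \<Longrightarrow> mat_vec n (mk n R) x i = sum x {j. j < n \<and> j \<in> R i}"
proof -
  assume i: "i < n"
  have "mat_vec n (mk n R) x i = (\<Sum>j<n. if j \<in> R i then x j else 0)"
    unfolding mat_vec_def mk_def using i by (auto intro!: sum.cong)
  also have "\<dots> = sum x {j\<in>{..<n}. j \<in> R i}"
    by (rule sum.inter_filter[OF finite_lessThan, symmetric])
  also have "{j\<in>{..<n}. j \<in> R i} = {j. j < n \<and> j \<in> R i}" by auto
  finally show ?thesis .
qed

lemma split2: "card {i. i < 2*(P::nat) \<and> Q i} = card {i. i < P \<and> Q i} + card {i. i < P \<and> Q (i+P)}"
proof -
  have e: "{i. i < 2*P \<and> Q i} = {i. i < P \<and> Q i} \<union> (\<lambda>i. i+P) ` {i. i < P \<and> Q (i+P)}"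
    (is "_ = ?A \<union> ?B")
  proof (rule set_eqI, rule iffI)
    fix i assume "i \<in> {i. i < 2*P \<and> Q i}"
    then show "i \<in> ?A \<union> ?B"
      by (cases "i < P") (auto simp: image_iff intro!: exI[of _ "i - P"])
  qed auto
  have "card (?A \<union> ?B) = card ?A + card ?B" by (rule card_Un_disjoint) auto
  also have "card ?B = card {i. i < P \<and> Q (i+P)}" by (rule card_image) (simp add: inj_on_def)
  finally show ?thesis using e by simp
qed

lemma modinv:
  assumes "(q::nat) < P"
  shows "nat ((int a - int (nat ((int a - int q) mod int P))) mod int P) = q"
proof -
  have P: "int P > 0" using assms by simp
  have "int (nat ((int a - int q) mod int P)) = (int a - int q) mod int P" using P by simp
  then have "(int a - int (nat ((int a - int q) mod int P))) mod int P = (int a - (int a - int q)) mod int P"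
    by (simp add: mod_diff_right_eq)
  also have "\<dots> = int q" using assms by simp
  finally show ?thesis by simp
qed

lemma window_count:
  assumes "w \<le> P" "0 < P"
  shows "card {q. q < P \<and> nat ((int a - int q) mod int P) < w} = w"
proof -
  let ?f = "\<lambda>q. nat ((int a - int q) mod int P)"
  let ?S = "{q. q < P \<and> ?f q < w}"
  have fP: "?f q < P" for q using assms(2)
    by (simp add: nat_less_iff)
  have inj: "inj_on ?f {..<P}"
    by (rule inj_on_inverseI[where g = ?f]) (metis lessThan_iff modinv)
  have "?f ` ?S = {..<w}"
  proof
    show "?f ` ?S \<subseteq> {..<w}" by auto
    show "{..<w} \<subseteq> ?f ` ?S"
    proof
      fix d assume d: "d \<in> {..<w}"
      then have "d < P" using assms by simp
      then have "?f (?f d) = d" by (rule modinv)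
      then show "d \<in> ?f ` ?S" using d fP[of d] by (auto simp: image_iff intro!: bexI[of _ "?f d"])
    qed
  qed
  moreover have "card (?f ` ?S) = card ?S"
    by (rule card_image) (rule inj_on_subset[OF inj], auto)
  ultimately show ?thesis by simp
qed

definition dd :: "nat \<Rightarrow> nat \<Rightarrow> nat \<Rightarrow> nat" where
  "dd P i j = nat ((int j - int i) mod int P)"

definition rows :: "nat \<Rightarrow> nat \<Rightarrow> nat \<Rightarrow> nat \<Rightarrow> bool \<Rightarrow> nat \<Rightarrow> nat set" where
  "rows P E w u \<beta> i =
   (if i < 2*P then {j. j < 2*P \<and> dd P i j < w} \<union> {j. 2*P \<le> j \<and> j < 2*P+E \<and> i mod P < u}
    else if E = 1 then {..<2*P+1}
    else if E = 2 then (if i = 2*P then {..<2*P+2} - {2*P+1} else {2*P+1})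
    else if i = 2*P then {2*P, 2*P+2} \<union> {j. \<beta> \<and> j < 2*P}
    else if i = 2*P+1 then {2*P+1}
    else {2*P, 2*P+1, 2*P+2} \<union> {j. \<beta> \<and> j < 2*P})"

definition ex :: "nat \<Rightarrow> bool \<Rightarrow> nat \<Rightarrow> nat \<Rightarrow> nat" where
  "ex E \<beta> P j = (if E = 0 then 0 else if E \<le> 2 then 1 else if j < 2*P then (if \<beta> then 2 else 0) else 2)"

lemma dd_shift: "dd P (i + P) j = dd P i j"
proof -
  have e: "int j - int (i + P) = (int j - int i) + (-1) * int P" by simp
  have "(int j - int (i + P)) mod int P = (int j - int i) mod int P"
    unfolding e by (rule mod_mult_self1)
  then show ?thesis unfolding dd_def by simp
qed

lemma pair_part:
  assumes "w \<le> P" "u \<le> P" "j < 2*P+E"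
  shows "card {i. i < 2*P \<and> j \<in> rows P E w u \<beta> i} = (if j < 2*P then 2*w else 2*u)"
proof (cases "j < 2*P")
  case True
  then have P: "0 < P" by simp
  have s: "{i. i < 2*P \<and> j \<in> rows P E w u \<beta> i} = {i. i < 2*P \<and> dd P i j < w}"
    using True by (auto simp: rows_def)
  have c1: "card {i. i < P \<and> dd P i j < w} = w"
    using window_count[OF assms(1) P, of j] by (simp add: dd_def)
  have c2: "card {i. i < P \<and> dd P (i+P) j < w} = w"
    using c1 by (simp add: dd_shift)
  show ?thesis using s split2[of P "\<lambda>i. dd P i j < w"] c1 c2 True by simp
next
  case False
  have s: "{i. i < 2*P \<and> j \<in> rows P E w u \<beta> i} = {i. i < 2*P \<and> i mod P < u}"
    using False assms(3) by (auto simp: rows_def)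
  have c1: "{i. i < P \<and> (i+P) mod P < u} = {..<u}" using assms(2) by auto
  have c2: "{i. i < P \<and> i mod P < u} = {..<u}" using assms(2) by auto
  show ?thesis using s split2[of P "\<lambda>i. i mod P < u"] c1 c2 False by simp
qed

lemma extra_part:
  assumes "E \<le> 3" "j < 2*P+E"
  shows "card {i. 2*P \<le> i \<and> i < 2*P+E \<and> j \<in> rows P E w u \<beta> i} = ex E \<beta> P j"
proof -
  consider "E = 0" | "E = 1" | "E = 2" | "E = 3" using assms(1) by linarith
  then show ?thesis
  proof cases
    case 1 then show ?thesis by (simp add: ex_def)
  next
    case 2
    then have "{i. 2*P \<le> i \<and> i < 2*P+E \<and> j \<in> rows P E w u \<beta> i} = {2*P}"
      using assms by (auto simp: rows_def)
    then show ?thesis using 2 by (simp add: ex_def)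
  next
    case 3
    show ?thesis
    proof (cases "j = 2*P+1")
      case True
      then have "{i. 2*P \<le> i \<and> i < 2*P+E \<and> j \<in> rows P E w u \<beta> i} = {2*P+1}"
        using 3 by (auto simp: rows_def)
      then show ?thesis using 3 by (simp add: ex_def)
    next
      case False
      then have "{i. 2*P \<le> i \<and> i < 2*P+E \<and> j \<in> rows P E w u \<beta> i} = {2*P}"
        using 3 assms by (auto simp: rows_def)
      then show ?thesis using 3 by (simp add: ex_def)
    qed
  next
    case 4
    note E3 = this
    consider "j < 2*P" | "j = 2*P" | "j = 2*P+1" | "j = 2*P+2" using assms E3 by linarith
    then show ?thesis
    proof cases
      case 1
      then have "{i. 2*P \<le> i \<and> i < 2*P+E \<and> j \<in> rows P E w u \<beta> i} = (if \<beta> then {2*P, 2*P+2} else {})"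
        using E3 by (auto simp: rows_def)
      then show ?thesis using E3 1 by (simp add: ex_def)
    next
      case 2
      then have "{i. 2*P \<le> i \<and> i < 2*P+E \<and> j \<in> rows P E w u \<beta> i} = {2*P, 2*P+2}"
        using E3 by (auto simp: rows_def)
      then show ?thesis using E3 2 by (simp add: ex_def)
    next
      case 3
      then have "{i. 2*P \<le> i \<and> i < 2*P+E \<and> j \<in> rows P E w u \<beta> i} = {2*P+1, 2*P+2}"
        using E3 by (auto simp: rows_def)
      then show ?thesis using E3 3 by (simp add: ex_def)
    next
      case 4
      then have "{i. 2*P \<le> i \<and> i < 2*P+E \<and> j \<in> rows P E w u \<beta> i} = {2*P, 2*P+2}"
        using E3 by (auto simp: rows_def)
      then show ?thesis using E3 4 by (simp add: ex_def)
    qed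
  qed
qed

lemma col_count:
  assumes "E \<le> 3" "w \<le> P" "u \<le> P" "j < 2*P+E"
  shows "vdeg (2*P+E) (mk (2*P+E) (rows P E w u \<beta>)) j = (if j < 2*P then 2*w else 2*u) + ex E \<beta> P j"
proof -
  have e: "{i. i < 2*P+E \<and> j \<in> rows P E w u \<beta> i} =
     {i. i < 2*P \<and> j \<in> rows P E w u \<beta> i} \<union> {i. 2*P \<le> i \<and> i < 2*P+E \<and> j \<in> rows P E w u \<beta> i}"
    by auto
  have "card ({i. i < 2*P \<and> j \<in> rows P E w u \<beta> i} \<union> {i. 2*P \<le> i \<and> i < 2*P+E \<and> j \<in> rows P E w u \<beta> i})
     = card {i. i < 2*P \<and> j \<in> rows P E w u \<beta> i} + card {i. 2*P \<le> i \<and> i < 2*P+E \<and> j \<in> rows P E w u \<beta> i}"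
    by (rule card_Un_disjoint) auto
  then show ?thesis
    using mk_vdeg[OF assms(4)] e pair_part[OF assms(2,3,4)] extra_part[OF assms(1,4)] by simp
qed

lemma rows_diag:
  assumes "E \<le> 3" "0 < w" "i < 2*P+E"
  shows "i \<in> rows P E w u \<beta> i"
  using assms by (auto simp: rows_def dd_def)

definition cc :: "nat \<Rightarrow> nat \<Rightarrow> bit" where
  "cc P i = (if P \<le> i \<and> i < 2*P then 1 else 0)"

lemma cc_vecs: "cc P \<in> vecs (2*P+E)" by (auto simp: cc_def vecs_def)

lemma rows_shift: "i < P \<Longrightarrow> rows P E w u \<beta> (i+P) = rows P E w u \<beta> i"
  by (simp add: rows_def dd_shift)

lemma bit_pair_count:
  fixes v :: "nat \<Rightarrow> bit"
  assumes "\<And>i. i < P \<Longrightarrow> v (i+P) = v i + 1"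
  shows "card {i. i < 2*P \<and> v i \<noteq> 0} = P"
proof -
  have "card {i. i < 2*P \<and> v i \<noteq> 0} = card {i. i < P \<and> v i \<noteq> 0} + card {i. i < P \<and> v (i+P) \<noteq> 0}"
    by (rule split2)
  also have "{i. i < P \<and> v (i+P) \<noteq> 0} = {i. i < P \<and> v i = 0}"
    using assms by (auto simp del: bit_not_zero_iff) (metis add_0 bit_not_one_iff one_add_one bit_2_eq_0)+
  also have "card {i. i < P \<and> v i \<noteq> 0} + card {i. i < P \<and> v i = 0} = card ({i. i < P \<and> v i \<noteq> 0} \<union> {i. i < P \<and> v i = 0})"
    by (rule card_Un_disjoint[symmetric]) auto
  also have "{i. i < P \<and> v i \<noteq> 0} \<union> {i. i < P \<and> v i = 0} = {..<P}" by auto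
  finally show ?thesis by simp
qed

lemma weight_bound:
  assumes "E \<le> 3"
  shows "weight (2*P+E) (vv (2*P+E) (mk (2*P+E) (rows P E w u \<beta>)) (cc P) x) \<le> P + min E 2"
proof -
  let ?n = "2*P+E"
  let ?R = "rows P E w u \<beta>"
  let ?v = "vv ?n (mk ?n ?R) (cc P) x"
  have mv: "\<And>i. i < ?n \<Longrightarrow> ?v i = sum x {j. j < ?n \<and> j \<in> ?R i} + cc P i"
    unfolding vv_def by (simp add: mk_mv)
  have sh: "?v (i+P) = ?v i + 1" if i: "i < P" for i
  proof -
    have "?v (i+P) = sum x {j. j < ?n \<and> j \<in> ?R i} + 1"
      using mv[of "i+P"] i by (simp add: rows_shift cc_def)
    moreover have "?v i = sum x {j. j < ?n \<and> j \<in> ?R i}"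
      using mv[of i] i by (simp add: cc_def)
    ultimately show ?thesis by simp
  qed
  have pc: "card {i. i < 2*P \<and> ?v i \<noteq> 0} = P" by (rule bit_pair_count) (rule sh)
  have e: "{i. i < ?n \<and> ?v i \<noteq> 0} = {i. i < 2*P \<and> ?v i \<noteq> 0} \<union> {i. 2*P \<le> i \<and> i < ?n \<and> ?v i \<noteq> 0}"
    by auto
  have "weight ?n ?v = card {i. i < 2*P \<and> ?v i \<noteq> 0} + card {i. 2*P \<le> i \<and> i < ?n \<and> ?v i \<noteq> 0}"
    unfolding weight_def e by (rule card_Un_disjoint) auto
  moreover have "card {i. 2*P \<le> i \<and> i < ?n \<and> ?v i \<noteq> 0} \<le> min E 2"
  proof (cases "E \<le> 2")
    case True
    have "card {i. 2*P \<le> i \<and> i < ?n \<and> ?v i \<noteq> 0} \<le> card {2*P..<?n}"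
      by (rule card_mono) auto
    then show ?thesis using True by simp
  next
    case False
    then have E3: "E = 3" using assms by simp
    have Ra: "{j. j < ?n \<and> j \<in> ?R (2*P+2)} = {j. j < ?n \<and> j \<in> ?R (2*P)} \<union> {2*P+1}"
      using E3 by (auto simp: rows_def)
    have Rb: "{j. j < ?n \<and> j \<in> ?R (2*P+1)} = {2*P+1}"
      using E3 by (auto simp: rows_def)
    have "sum x {j. j < ?n \<and> j \<in> ?R (2*P+2)} = sum x {j. j < ?n \<and> j \<in> ?R (2*P)} + x (2*P+1)"
      unfolding Ra using E3 by (subst sum.union_disjoint) (auto simp: rows_def)
    then have vc: "?v (2*P+2) = ?v (2*P) + ?v (2*P+1)"
      using mv[of "2*P+2"] mv[of "2*P"] mv[of "2*P+1"] E3 Rb by (simp add: cc_def)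
    have "\<exists>k\<in>{2*P, 2*P+1, 2*P+2}. ?v k = 0"
    proof (rule ccontr)
      assume "\<not> ?thesis"
      then have "?v (2*P) = 1" "?v (2*P+1) = 1" "?v (2*P+2) = 1" by auto
      then show False using vc by simp
    qed
    then obtain k where k: "k \<in> {2*P, 2*P+1, 2*P+2}" "?v k = 0" by blast
    have "card {i. 2*P \<le> i \<and> i < ?n \<and> ?v i \<noteq> 0} \<le> card ({2*P, 2*P+1, 2*P+2} - {k})"
      using E3 k by (intro card_mono) auto
    also have "\<dots> = 2" using k by (auto simp: card_Diff_singleton)
    finally show ?thesis using E3 by simp
  qed
  ultimately show ?thesis using pc by simp
qed

definition T :: "nat \<Rightarrow> nat \<Rightarrow> nat" where
  "T n m = (if even n \<and> odd m then n div 2 + 1 else (n + 1) div 2)"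

lemma generic:
  assumes n: "n = 2*P+E" and E: "E \<le> 3" and wP: "w \<le> P" and uP: "u \<le> P"
    and w0: "0 < P \<Longrightarrow> 0 < w"
    and deg: "\<And>j. j < n \<Longrightarrow> (if j < 2*P then 2*w else 2*u) + ex E \<beta> P j = m"
    and TT: "P + min E 2 \<le> t"
  shows "\<exists>W c. W \<in> A_star n m \<and> c \<in> vecs n \<and> MW n W c \<le> t"
proof (intro exI conjI)
  let ?W = "mk n (rows P E w u \<beta>)"
  show "?W \<in> A_star n m"
    unfolding A_star_def
  proof (intro CollectI conjI allI impI)
    show "wiring n ?W"
    proof (rule mk_wiring)
      fix i assume i: "i < n"
      show "i \<in> rows P E w u \<beta> i"
      proof (cases "i < 2*P")
        case True then have "0 < w" using w0 by simp
        then show ?thesis using True by (simp add: rows_def dd_def)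
      next
        case False then show ?thesis using i n E by (auto simp: rows_def)
      qed
    qed
    fix j assume j: "j < n"
    show "vdeg n ?W j = m" using col_count[OF E wP uP, of j \<beta>] j deg[OF j] n by simp
  qed
  show "cc P \<in> vecs n" using n cc_vecs by simp
  show "MW n ?W (cc P) \<le> t"
  proof (rule MW_le)
    fix x
    have "weight (2*P+E) (vv (2*P+E) (mk (2*P+E) (rows P E w u \<beta>)) (cc P) x) \<le> P + min E 2"
      by (rule weight_bound[OF E])
    then show "weight n (vv n ?W (cc P) x) \<le> t" using n TT by simp
  qed
qed

lemma construct:
  assumes "2 \<le> m" "m \<le> n"
  shows "\<exists>W c. W \<in> A_star n m \<and> c \<in> vecs n \<and> MW n W c \<le> T n m"
proof -
  consider "even n" "even m" | "odd n" "odd m" | "even n" "odd m" | "odd n" "even m" by blast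
  then show ?thesis
  proof cases
    case 1
    show ?thesis
      by (rule generic[where P="n div 2" and E=0 and w="m div 2" and u="m div 2" and \<beta>=False])
        (use 1 assms in \<open>auto simp: ex_def T_def\<close>)
  next
    case 2
    show ?thesis
      by (rule generic[where P="n div 2" and E=1 and w="m div 2" and u="m div 2" and \<beta>=False])
        (use 2 assms in \<open>auto simp: ex_def T_def elim!: oddE\<close>)
  next
    case 3
    then have "m < n" using assms by (metis le_neq_implies_less)
    show ?thesis
      by (rule generic[where P="n div 2 - 1" and E=2 and w="m div 2" and u="m div 2" and \<beta>=False])
        (use 3 assms \<open>m < n\<close> in \<open>auto simp: ex_def T_def elim!: oddE evenE\<close>)
  next
    case 4
    then have "m < n" using assms by (metis le_neq_implies_less)
    show ?thesis
      by (rule generic[where P="n div 2 - 1" and E=3 and w="min (n div 2 - 1) (if m = 2 then 1 else m div 2 - 1)"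
            and u="m div 2 - 1" and \<beta>="4 \<le> m"])
        (use 4 assms \<open>m < n\<close> in \<open>auto simp: ex_def T_def elim!: oddE evenE\<close>)
  qed
qed

lemma Min_eq_nat: "finite S \<Longrightarrow> (b::nat) \<in> S \<Longrightarrow> (\<And>s. s \<in> S \<Longrightarrow> b \<le> s) \<Longrightarrow> Min S = b"
  by (simp add: Min_eqI)

lemma MW_le_n: "MW n W c \<le> n"
  by (rule MW_le) (rule weight_le)

lemma lowerT:
  assumes "W \<in> A_star n m" "0 < n"
  shows "T n m \<le> MW n W c"
proof -
  have w: "wiring n W" and d: "vdeg n W 0 = m" using assms unfolding A_star_def by auto
  have "n \<le> 2 * MW n W c" by (rule lower1[OF w assms(2)])
  then have a: "(n + 1) div 2 \<le> MW n W c" by linarith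
  show ?thesis
  proof (cases "even n \<and> odd m")
    case True
    then have "n div 2 + 1 \<le> MW n W c" using lower2[OF w assms(2)] d by simp
    then show ?thesis using True by (simp add: T_def)
  next
    case False then show ?thesis using a by (auto simp: T_def)
  qed
qed

lemma nu_star_val:
  assumes "2 \<le> m" "m \<le> n"
  shows "nu_star n m = T n m"
proof -
  let ?S = "{MW n W c |W c. W \<in> A_star n m \<and> c \<in> vecs n}"
  obtain W c where Wc: "W \<in> A_star n m" "c \<in> vecs n" "MW n W c \<le> T n m"
    using construct[OF assms] by blast
  have n: "0 < n" using assms by simp
  have "MW n W c = T n m" using Wc(3) lowerT[OF Wc(1) n, of c] by simp
  then have mem: "T n m \<in> ?S" using Wc by force
  have fin: "finite ?S"
    by (rule finite_subset[of _ "{..n}"]) (auto intro: MW_le_n)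
  show ?thesis unfolding nu_star_def
    by (rule Min_eq_nat[OF fin mem]) (auto intro: lowerT[OF _ n])
qed

lemma nu_val:
  assumes "0 < n" "2 \<le> m \<or> (n = 1 \<and> 1 \<le> m)"
  shows "nu n m = (n + 1) div 2"
proof -
  let ?S = "{MW n W c |W c. W \<in> A n m \<and> c \<in> vecs n}"
  have low: "(n + 1) div 2 \<le> MW n W c" if "W \<in> A n m" for W c
  proof -
    have "n \<le> 2 * MW n W c" using lower1[of n W c] that assms(1) unfolding A_def by auto
    then show ?thesis by linarith
  qed
  have "\<exists>W c. W \<in> A n m \<and> c \<in> vecs n \<and> MW n W c \<le> (n + 1) div 2"
  proof (cases "2 \<le> n")
    case True
    then obtain W c where Wc: "W \<in> A_star n 2" "c \<in> vecs n" "MW n W c \<le> T n 2"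
      using construct[of 2 n] by blast
    have "0 \<in> {..<n}" using True by simp
    then have ne: "{..<n} \<noteq> {}" by blast
    have all: "\<forall>j\<in>{..<n}. vdeg n W j \<le> m" using Wc(1) assms True by (auto simp: A_star_def)
    have ne2: "vdeg n W ` {..<n} \<noteq> {}" using ne by simp
    have "wdeg n W \<le> m"
      unfolding wdeg_def using all ne2 by (subst Max_le_iff) auto
    then have "W \<in> A n m" using Wc(1) by (auto simp: A_def A_star_def)
    then show ?thesis using Wc by (auto simp: T_def)
  next
    case False
    then have n1: "n = 1" using assms by simp
    then have m1: "1 \<le> m" using assms by auto
    let ?W = "mk 1 (\<lambda>i. {i})"
    have w: "wiring 1 ?W" by (rule mk_wiring) simp
    have "vdeg 1 ?W 0 = 1" by (simp add: mk_vdeg)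
    then have "vdeg 1 ?W ` {..<1} = {1}" by auto
    then have "wdeg 1 ?W \<le> m" using m1 unfolding wdeg_def by simp
    then have "?W \<in> A 1 m" using w by (simp add: A_def)
    moreover have "MW 1 ?W (\<lambda>_. 0) \<le> 1" by (rule MW_le_n)
    ultimately show ?thesis using n1 zero_vecs[of 1] by auto
  qed
  then obtain W c where Wc: "W \<in> A n m" "c \<in> vecs n" "MW n W c \<le> (n + 1) div 2" by blast
  have "MW n W c = (n + 1) div 2" using Wc(3) low[OF Wc(1), of c] by simp
  then have mem: "(n + 1) div 2 \<in> ?S" using Wc by force
  have fin: "finite ?S"
    by (rule finite_subset[of _ "{..n}"]) (auto intro: MW_le_n)
  show ?thesis unfolding nu_def
    by (rule Min_eq_nat[OF fin mem]) (use low in blast)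
qed

theorem theorem3p2:
  fixes n m :: nat
  assumes "0 < n" and "1 < m"
  shows "(nu1 n = nu n m \<and> nu n m = nat \<lceil>real n / 2\<rceil>)
    \<and> (n \<ge> m \<longrightarrow> nu_star n m = (if even n \<and> odd m then nu n m + 1 else nu n m))
    \<and> (\<forall>k>1. nu_star k 2 = nu_star1 k \<and> nu_star1 k = nu1 k)"
proof (intro conjI impI allI)
  have a: "nu n m = (n + 1) div 2" using assms by (intro nu_val) auto
  have b: "nu n n = (n + 1) div 2" using assms by (intro nu_val) auto
  show "nu n n = nu n m" using a b by simp
  show "nu n m = nat \<lceil>real n / 2\<rceil>" using a ceil_half by simp
  assume "m \<le> n"
  then show "nu_star n m = (if even n \<and> odd m then nu n m + 1 else nu n m)"
    using nu_star_val[of m n] assms a by (auto simp: T_def elim!: evenE)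
next
  fix k :: nat assume k: "1 < k"
  have s2: "nu_star k 2 = (k + 1) div 2" using nu_star_val[of 2 k] k by (simp add: T_def)
  have sk: "nu_star k k = (k + 1) div 2" using nu_star_val[of k k] k by (simp add: T_def)
  have nk: "nu k k = (k + 1) div 2" using k by (intro nu_val) auto
  show "nu_star k 2 = nu_star k k" using s2 sk by simp
  show "nu_star k k = nu k k" using sk nk by simp
qed

end
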